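(* Let $(C,\mathfrak p,\mathfrak d)$ be a regular $q$-magma coalgebra. Then $(C,\mathfrak p,\mathfrak d)$ is a $q$-cycle coalgebra if and only if for all $i,j,k\in\{0,\dots,n-1\}$: $$\sum_{a+b=j}\sum_{h=0}^i\sum_{l=0}^k\mathfrak p_{ia}^h\mathfrak d_{kb}^l\mathfrak p_{hl}^1=\sum_{c+d=k}\sum_{h=0}^i\sum_{l=0}^j\mathfrak p_{ic}^h\mathfrak p_{jd}^l\mathfrak p_{hl}^1,$$ $$\sum_{a+b=j}\sum_{h=0}^i\sum_{l=0}^k\mathfrak p_{ia}^h\mathfrak p_{kb}^l\mathfrak d_{hl}^1=\sum_{c+d=k}\sum_{h=0}^i\sum_{l=0}^j\mathfrak d_{ic}^h\mathfrak d_{jd}^l\mathfrak p_{hl}^1,$$ $$\sum_{a+b=j}\sum_{h=0}^i\sum_{l=0}^k\mathfrak d_{ia}^h\mathfrak p_{kb}^l\mathfrak d_{hl}^1=\sum_{c+d=k}\sum_{h=0}^i\sum_{l=0}^j\mathfrak d_{ic}^h\mathfrak d_{jd}^l\mathfrak d_{hl}^1.$$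
   Context: $K$ is an algebraically closed field of characteristic $0$ and $n\ge2$. $C$ is the coalgebra dual to $K[y]/\langle y^n\rangle$: basis $x_0,\dots,x_{n-1}$, $\Delta(x_i)=\sum_{j+k=i}x_j\otimes x_k$, $\epsilon(x_i)=\delta_{i0}$; $C\otimes C$ has the tensor product coalgebra structure; Sweedler notation $\Delta(b)=b_{(1)}\otimes b_{(2)}$. For linear maps $\mathfrak p,\mathfrak d\colon C\otimes C\to C$ write $a\cdot b=\mathfrak p(a\otimes b)$, $a:b=\mathfrak d(a\otimes b)$, $\mathfrak p(x_i\otimes x_j)=\sum_{k=0}^{n-1}\mathfrak p_{ij}^kx_k$, $\mathfrak d(x_i\otimes x_j)=\sum_{k=0}^{n-1}\mathfrak d_{ij}^kx_k$, with the convention $\mathfrak p_{ij}^k=\mathfrak d_{ij}^k=0$ if $k\ge n$, $i<0$ or $j<0$; sums over $a+b=j$, $c+d=k$ range over nonnegative integers. A triple $(C,\mathfrak p,\mathfrak d)$ with $\mathfrak p,\mathfrak d$ coalgebra morphisms is a regular $q$-magma coalgebra if there are coalgebra morphisms $a\otimes b\mapsto a^b$, $a\otimes b\mapsto a_b$ from $C\otimes C$ to $C$ with $a^{b_{(1)}}\cdot b_{(2)}=(a\cdot b_{(1)})^{b_{(2)}}=\epsilon(b)a$ and $(a:b_{(2)})_{b_{(1)}}=a_{b_{(2)}}:b_{(1)}=\epsilon(b)a$. It is a ($q$-cycle, i.e. regular) $q$-cycle coalgebra if moreover for all $a,b,c\in C$: (1) $(a\cdot b_{(1)})\cdot(c:b_{(2)})=(a\cdot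 c_{(2)})\cdot(b\cdot c_{(1)})$; (2) $(a\cdot b_{(1)}):(c\cdot b_{(2)})=(a:c_{(2)})\cdot(b:c_{(1)})$; (3) $(a:b_{(1)}):(c:b_{(2)})=(a:c_{(2)}):(b\cdot c_{(1)})$. *)

theory Defs
  imports "HOL-Computational_Algebra.Polynomial"
begin

text \<open>The coalgebra C dual to K[y]/(y^n) is modelled concretely: an element of C is a
coefficient function u :: nat => K with u k = 0 for k >= n (u = sum_k u k x_k).
A linear map C (x) C -> C is given by its structure constants P i j k (the coefficient of
x_k in the image of x_i (x) x_j), for i, j, k < n; values outside this range are ignored.\<close>

definition inC :: "nat \<Rightarrow> (nat \<Rightarrow> 'a::zero) \<Rightarrow> bool" where
  "inC n u \<longleftrightarrow> (\<forall>k\<ge>n. u k = 0)"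

definition xb :: "nat \<Rightarrow> nat \<Rightarrow> 'a::{zero,one}" where
  "xb i = (\<lambda>k. if k = i then 1 else 0)"

definition eps :: "(nat \<Rightarrow> 'a) \<Rightarrow> 'a" where
  "eps u = u 0"

definition bop :: "nat \<Rightarrow> (nat \<Rightarrow> nat \<Rightarrow> nat \<Rightarrow> 'a::comm_ring_1)
    \<Rightarrow> (nat \<Rightarrow> 'a) \<Rightarrow> (nat \<Rightarrow> 'a) \<Rightarrow> (nat \<Rightarrow> 'a)" where
  "bop n P u v = (\<lambda>k. if k < n then (\<Sum>i<n. \<Sum>j<n. u i * v j * P i j k) else 0)"

text \<open>Sweedler expression F(b_(1), b_(2)) for F linear on C (x) C:
  since Delta(x_j) = sum_{s+t=j} x_s (x) x_t, this is sum_j b_j sum_{s+t=j} F(x_s, x_t).\<close>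
definition swe :: "nat \<Rightarrow> (nat \<Rightarrow> 'a::comm_ring_1)
    \<Rightarrow> ((nat \<Rightarrow> 'a) \<Rightarrow> (nat \<Rightarrow> 'a) \<Rightarrow> (nat \<Rightarrow> 'a)) \<Rightarrow> (nat \<Rightarrow> 'a)" where
  "swe n b F = (\<lambda>k. \<Sum>j<n. b j * (\<Sum>s\<le>j. F (xb s) (xb (j - s)) k))"

text \<open>P : C (x) C -> C is a coalgebra morphism (C (x) C with the tensor product coalgebra
  structure): epsilon(P(x_i (x) x_j)) = epsilon(x_i) epsilon(x_j) and
  Delta(P(x_i (x) x_j)) = sum_{a+b=i} sum_{c+d=j} P(x_a (x) x_c) (x) P(x_b (x) x_d),
  compared coefficientwise at x_u (x) x_v.\<close>
definition coalg_mor :: "nat \<Rightarrow> (nat \<Rightarrow> nat \<Rightarrow> nat \<Rightarrow> 'a::comm_ring_1) \<Rightarrow> bool" where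
  "coalg_mor n P \<longleftrightarrow>
     (\<forall>i<n. \<forall>j<n.
        P i j 0 = (if i = 0 \<and> j = 0 then 1 else 0) \<and>
        (\<forall>u<n. \<forall>v<n.
           (if u + v < n then P i j (u + v) else 0) =
           (\<Sum>a\<le>i. \<Sum>c\<le>j. P a c u * P (i - a) (j - c) v)))"

text \<open>regular q-magma coalgebra (C, p, d); Q gives a^b, R gives a_b\<close>
definition regular_qmagma ::
    "nat \<Rightarrow> (nat \<Rightarrow> nat \<Rightarrow> nat \<Rightarrow> 'a::comm_ring_1) \<Rightarrow> (nat \<Rightarrow> nat \<Rightarrow> nat \<Rightarrow> 'a) \<Rightarrow> bool" where
  "regular_qmagma n p d \<longleftrightarrow>
     coalg_mor n p \<and> coalg_mor n d \<and>
     (\<exists>Q R. coalg_mor n Q \<and> coalg_mor n R \<and>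
        (\<forall>a b. inC n a \<longrightarrow> inC n b \<longrightarrow>
           swe n b (\<lambda>s t. bop n p (bop n Q a s) t) = (\<lambda>k. eps b * a k) \<and>
           swe n b (\<lambda>s t. bop n Q (bop n p a s) t) = (\<lambda>k. eps b * a k) \<and>
           swe n b (\<lambda>s t. bop n R (bop n d a t) s) = (\<lambda>k. eps b * a k) \<and>
           swe n b (\<lambda>s t. bop n d (bop n R a t) s) = (\<lambda>k. eps b * a k)))"

definition qcycle_coalg ::
    "nat \<Rightarrow> (nat \<Rightarrow> nat \<Rightarrow> nat \<Rightarrow> 'a::comm_ring_1) \<Rightarrow> (nat \<Rightarrow> nat \<Rightarrow> nat \<Rightarrow> 'a) \<Rightarrow> bool" where
  "qcycle_coalg n p d \<longleftrightarrow>
     regular_qmagma n p d \<and>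
     (\<forall>a b c. inC n a \<longrightarrow> inC n b \<longrightarrow> inC n c \<longrightarrow>
        swe n b (\<lambda>s t. bop n p (bop n p a s) (bop n d c t)) =
          swe n c (\<lambda>s t. bop n p (bop n p a t) (bop n p b s)) \<and>
        swe n b (\<lambda>s t. bop n d (bop n p a s) (bop n p c t)) =
          swe n c (\<lambda>s t. bop n p (bop n d a t) (bop n d b s)) \<and>
        swe n b (\<lambda>s t. bop n d (bop n d a s) (bop n d c t)) =
          swe n c (\<lambda>s t. bop n d (bop n d a t) (bop n p b s)))"

end

theory Submission
  imports Defs
begin

lemma tri:
  fixes g :: "nat \<Rightarrow> nat \<Rightarrow> 'a::comm_monoid_add"
  shows "(\<Sum>h<n. \<Sum>h1\<le>h. g h1 (h - h1)) = (\<Sum>h1<n. \<Sum>h2<n. if h1+h2<n then g h1 h2 else 0)"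
proof -
  have "(\<Sum>h<n. \<Sum>h1\<le>h. g h1 (h - h1)) = (\<Sum>(i,j)\<in>{(i,j). i+j<n}. g i j)"
    by (rule sum.triangle_reindex[symmetric])
  also have "{(i,j). i+j<n} = {x \<in> {..<n}\<times>{..<n}. fst x + snd x < n}" by auto
  also have "(\<Sum>(i,j)\<in>{x \<in> {..<n}\<times>{..<n}. fst x + snd x < n}. g i j)
      = (\<Sum>x\<in>{..<n}\<times>{..<n}. if fst x + snd x < n then g (fst x) (snd x) else 0)"
    by (subst sum.inter_filter[symmetric]) (auto simp: case_prod_beta)
  also have "\<dots> = (\<Sum>h1<n. \<Sum>h2<n. if h1+h2<n then g h1 h2 else 0)"
    by (simp add: sum.cartesian_product case_prod_beta)
  finally show ?thesis .
qed

lemma swap4: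
  "(\<Sum>x\<in>X. \<Sum>p\<in>P. \<Sum>q\<in>Q. \<Sum>r\<in>R. \<Sum>s\<in>S. f x p q r s) =
   (\<Sum>p\<in>P. \<Sum>q\<in>Q. \<Sum>r\<in>R. \<Sum>s\<in>S. \<Sum>x\<in>X. f x p q r s)"
  apply (rule trans[OF sum.swap])
  apply (rule sum.cong[OF refl])
  apply (rule trans[OF sum.swap])
  apply (rule sum.cong[OF refl])
  apply (rule trans[OF sum.swap])
  apply (rule sum.cong[OF refl])
  apply (rule sum.swap)
  done

definition HH :: "nat \<Rightarrow> (nat\<Rightarrow>nat\<Rightarrow>nat\<Rightarrow>'a::comm_ring_1) \<Rightarrow> (nat\<Rightarrow>nat\<Rightarrow>nat\<Rightarrow>'a) \<Rightarrow> (nat\<Rightarrow>nat\<Rightarrow>nat\<Rightarrow>'a)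
   \<Rightarrow> nat\<Rightarrow>nat\<Rightarrow>nat\<Rightarrow>nat\<Rightarrow>nat\<Rightarrow>'a" where
 "HH n A B E i a k b m = (\<Sum>h<n. \<Sum>l<n. A i a h * B k b l * E h l m)"

lemma cm_D: "coalg_mor n P \<Longrightarrow> i<n \<Longrightarrow> j<n \<Longrightarrow> u<n \<Longrightarrow> v<n \<Longrightarrow>
   (if u + v < n then P i j (u + v) else 0) = (\<Sum>a\<le>i. \<Sum>c\<le>j. P a c u * P (i - a) (j - c) v)"
  unfolding coalg_mor_def by blast

lemma cm_0: "coalg_mor n P \<Longrightarrow> i<n \<Longrightarrow> j<n \<Longrightarrow> P i j 0 = (if i = 0 \<and> j = 0 then 1 else 0)"
  unfolding coalg_mor_def by blast

lemma prod4:
  fixes f :: "nat \<Rightarrow> nat \<Rightarrow> 'a::comm_ring_1"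
  shows "(\<Sum>x\<in>X. \<Sum>y\<in>Y. f x y) * (\<Sum>z\<in>Z. \<Sum>w\<in>W. g z w) * c =
    (\<Sum>x\<in>X. \<Sum>y\<in>Y. \<Sum>z\<in>Z. \<Sum>w\<in>W. f x y * g z w * c)"
proof -
  have "(\<Sum>x\<in>X. \<Sum>y\<in>Y. f x y) * (\<Sum>z\<in>Z. \<Sum>w\<in>W. g z w) * c =
    (\<Sum>x\<in>X. \<Sum>y\<in>Y. f x y * (\<Sum>z\<in>Z. \<Sum>w\<in>W. g z w) * c)"
    by (simp only: sum_distrib_right)
  also have "\<dots> = (\<Sum>x\<in>X. \<Sum>y\<in>Y. \<Sum>z\<in>Z. \<Sum>w\<in>W. f x y * g z w * c)"
    by (intro sum.cong refl) (simp only: sum_distrib_left sum_distrib_right)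
  finally show ?thesis .
qed

lemma prod2:
  fixes f :: "nat \<Rightarrow> nat \<Rightarrow> 'a::comm_ring_1"
  shows "(\<Sum>x\<in>X. \<Sum>y\<in>Y. f x y) * (\<Sum>z\<in>Z. \<Sum>w\<in>W. g z w) =
    (\<Sum>x\<in>X. \<Sum>y\<in>Y. \<Sum>z\<in>Z. \<Sum>w\<in>W. f x y * g z w)"
proof -
  have "(\<Sum>x\<in>X. \<Sum>y\<in>Y. f x y) * (\<Sum>z\<in>Z. \<Sum>w\<in>W. g z w) =
    (\<Sum>x\<in>X. \<Sum>y\<in>Y. f x y * (\<Sum>z\<in>Z. \<Sum>w\<in>W. g z w))"
    by (simp only: sum_distrib_right)
  also have "\<dots> = (\<Sum>x\<in>X. \<Sum>y\<in>Y. \<Sum>z\<in>Z. \<Sum>w\<in>W. f x y * g z w)"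
    by (intro sum.cong refl) (simp only: sum_distrib_left)
  finally show ?thesis .
qed

lemma swap44:
  "(\<Sum>x1\<in>X1. \<Sum>x2\<in>X2. \<Sum>x3\<in>X3. \<Sum>x4\<in>X4. \<Sum>y1\<in>Y1. \<Sum>y2\<in>Y2. \<Sum>y3\<in>Y3. \<Sum>y4\<in>Y4. f x1 x2 x3 x4 y1 y2 y3 y4)
 = (\<Sum>y1\<in>Y1. \<Sum>y2\<in>Y2. \<Sum>y3\<in>Y3. \<Sum>y4\<in>Y4. \<Sum>x1\<in>X1. \<Sum>x2\<in>X2. \<Sum>x3\<in>X3. \<Sum>x4\<in>X4. f x1 x2 x3 x4 y1 y2 y3 y4)"
proof -
  have 1: "\<And>x1 x2 x3. (\<Sum>x4\<in>X4. \<Sum>y1\<in>Y1. \<Sum>y2\<in>Y2. \<Sum>y3\<in>Y3. \<Sum>y4\<in>Y4. f x1 x2 x3 x4 y1 y2 y3 y4)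
     = (\<Sum>y1\<in>Y1. \<Sum>y2\<in>Y2. \<Sum>y3\<in>Y3. \<Sum>y4\<in>Y4. \<Sum>x4\<in>X4. f x1 x2 x3 x4 y1 y2 y3 y4)"
    by (rule swap4)
  have 2: "\<And>x1 x2. (\<Sum>x3\<in>X3. \<Sum>y1\<in>Y1. \<Sum>y2\<in>Y2. \<Sum>y3\<in>Y3. \<Sum>y4\<in>Y4. \<Sum>x4\<in>X4. f x1 x2 x3 x4 y1 y2 y3 y4)
     = (\<Sum>y1\<in>Y1. \<Sum>y2\<in>Y2. \<Sum>y3\<in>Y3. \<Sum>y4\<in>Y4. \<Sum>x3\<in>X3. \<Sum>x4\<in>X4. f x1 x2 x3 x4 y1 y2 y3 y4)"
    by (rule swap4)
  have 3: "\<And>x1. (\<Sum>x2\<in>X2. \<Sum>y1\<in>Y1. \<Sum>y2\<in>Y2. \<Sum>y3\<in>Y3. \<Sum>y4\<in>Y4. \<Sum>x3\<in>X3. \<Sum>x4\<in>X4. f x1 x2 x3 x4 y1 y2 y3 y4)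
     = (\<Sum>y1\<in>Y1. \<Sum>y2\<in>Y2. \<Sum>y3\<in>Y3. \<Sum>y4\<in>Y4. \<Sum>x2\<in>X2. \<Sum>x3\<in>X3. \<Sum>x4\<in>X4. f x1 x2 x3 x4 y1 y2 y3 y4)"
    by (rule swap4)
  have 4: "(\<Sum>x1\<in>X1. \<Sum>y1\<in>Y1. \<Sum>y2\<in>Y2. \<Sum>y3\<in>Y3. \<Sum>y4\<in>Y4. \<Sum>x2\<in>X2. \<Sum>x3\<in>X3. \<Sum>x4\<in>X4. f x1 x2 x3 x4 y1 y2 y3 y4)
     = (\<Sum>y1\<in>Y1. \<Sum>y2\<in>Y2. \<Sum>y3\<in>Y3. \<Sum>y4\<in>Y4. \<Sum>x1\<in>X1. \<Sum>x2\<in>X2. \<Sum>x3\<in>X3. \<Sum>x4\<in>X4. f x1 x2 x3 x4 y1 y2 y3 y4)"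
    by (rule swap4)
  show ?thesis by (simp only: 1 2 3 4)
qed

lemma HH_comult:
  assumes A: "coalg_mor n A" and B: "coalg_mor n B" and E: "coalg_mor n E"
    and lt: "i<n" "a<n" "k<n" "b<n" "u<n" "v<n"
  shows "(if u+v<n then HH n A B E i a k b (u+v) else 0) =
    (\<Sum>i1\<le>i. \<Sum>a1\<le>a. \<Sum>k1\<le>k. \<Sum>b1\<le>b.
       HH n A B E i1 a1 k1 b1 u * HH n A B E (i-i1) (a-a1) (k-k1) (b-b1) v)"
proof -
  have "(if u+v<n then HH n A B E i a k b (u+v) else 0) =
     (\<Sum>h<n. \<Sum>l<n. A i a h * B k b l * (if u+v<n then E h l (u+v) else 0))"
    by (simp add: HH_def)
  also have "\<dots> = (\<Sum>h<n. \<Sum>l<n. A i a h * B k b l *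
        (\<Sum>h1\<le>h. \<Sum>l1\<le>l. E h1 l1 u * E (h-h1) (l-l1) v))"
    using cm_D[OF E _ _ lt(5,6)] by simp
  also have "\<dots> = (\<Sum>h<n. \<Sum>h1\<le>h. \<Sum>l<n. \<Sum>l1\<le>l.
        A i a (h1 + (h-h1)) * B k b (l1 + (l-l1)) * (E h1 l1 u * E (h-h1) (l-l1) v))"
    apply (rule sum.cong[OF refl])
    apply (simp add: sum_distrib_left)
    apply (rule sum.swap)
    done
  also have "\<dots> = (\<Sum>h1<n. \<Sum>h2<n. \<Sum>l1<n. \<Sum>l2<n.
        (if h1+h2<n then A i a (h1 + h2) else 0) * (if l1+l2<n then B k b (l1 + l2) else 0)
         * (E h1 l1 u * E h2 l2 v))"
    apply (subst tri[where g="\<lambda>h1 h2. \<Sum>l<n. \<Sum>l1\<le>l. A i a (h1 + h2) * B k b (l1 + (l-l1)) * (E h1 l1 u * E h2 (l-l1) v)"])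
    apply (rule sum.cong[OF refl])+
    apply (subst tri[where g="\<lambda>l1 l2. A i a (_ + _) * B k b (l1 + l2) * (E _ l1 u * E _ l2 v)"])
    apply (auto intro!: sum.cong)
    done
  also have "\<dots> = (\<Sum>h1<n. \<Sum>h2<n. \<Sum>l1<n. \<Sum>l2<n.
        (\<Sum>i1\<le>i. \<Sum>a1\<le>a. A i1 a1 h1 * A (i - i1) (a - a1) h2) *
        (\<Sum>k1\<le>k. \<Sum>b1\<le>b. B k1 b1 l1 * B (k - k1) (b - b1) l2)
         * (E h1 l1 u * E h2 l2 v))"
    using cm_D[OF A lt(1,2)] cm_D[OF B lt(3,4)] by (intro sum.cong refl) simp
  also have "\<dots> = (\<Sum>h1<n. \<Sum>l1<n. \<Sum>h2<n. \<Sum>l2<n.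
        \<Sum>i1\<le>i. \<Sum>a1\<le>a. \<Sum>k1\<le>k. \<Sum>b1\<le>b.
        (A i1 a1 h1 * B k1 b1 l1 * E h1 l1 u) * (A (i - i1) (a - a1) h2 * B (k - k1) (b - b1) l2 * E h2 l2 v))"
    apply (rule sum.cong[OF refl])
    apply (rule trans[OF sum.swap])
    apply (intro sum.cong refl)
    apply (subst prod4)
    apply (intro sum.cong refl)
    apply (simp add: mult_ac)
    done
  also have "\<dots> = (\<Sum>i1\<le>i. \<Sum>a1\<le>a. \<Sum>k1\<le>k. \<Sum>b1\<le>b. \<Sum>h1<n. \<Sum>l1<n. \<Sum>h2<n. \<Sum>l2<n.
        (A i1 a1 h1 * B k1 b1 l1 * E h1 l1 u) * (A (i - i1) (a - a1) h2 * B (k - k1) (b - b1) l2 * E h2 l2 v))"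
    by (rule swap44)
  also have "\<dots> = (\<Sum>i1\<le>i. \<Sum>a1\<le>a. \<Sum>k1\<le>k. \<Sum>b1\<le>b.
       HH n A B E i1 a1 k1 b1 u * HH n A B E (i-i1) (a-a1) (k-k1) (b-b1) v)"
    unfolding HH_def by (intro sum.cong refl) (rule prod2[symmetric])
  finally show ?thesis .
qed

lemma tri_le:
  fixes g :: "nat \<Rightarrow> nat \<Rightarrow> 'a::comm_monoid_add"
  shows "(\<Sum>h\<le>n. \<Sum>h1\<le>h. g h1 (h - h1)) = (\<Sum>h1\<le>n. \<Sum>h2\<le>n. if h1+h2\<le>n then g h1 h2 else 0)"
proof -
  have "(\<Sum>h\<le>n. \<Sum>h1\<le>h. g h1 (h - h1)) = (\<Sum>(i,j)\<in>{(i,j). i+j\<le>n}. g i j)"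
    by (rule sum.triangle_reindex_eq[symmetric])
  also have "{(i,j). i+j\<le>n} = {x \<in> {..n}\<times>{..n}. fst x + snd x \<le> n}" by auto
  also have "(\<Sum>(i,j)\<in>{x \<in> {..n}\<times>{..n}. fst x + snd x \<le> n}. g i j)
      = (\<Sum>x\<in>{..n}\<times>{..n}. if fst x + snd x \<le> n then g (fst x) (snd x) else 0)"
    by (subst sum.inter_filter[symmetric]) (auto simp: case_prod_beta)
  also have "\<dots> = (\<Sum>h1\<le>n. \<Sum>h2\<le>n. if h1+h2\<le>n then g h1 h2 else 0)"
    by (simp add: sum.cartesian_product case_prod_beta)
  finally show ?thesis .
qed

lemma restr:
  fixes F :: "nat \<Rightarrow> 'a::comm_monoid_add"
  assumes "m \<le> j"
  shows "(\<Sum>b\<le>j-m. F b) = (\<Sum>b\<le>j. if m + b \<le> j then F b else 0)"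
proof -
  have e: "{b \<in> {..j}. m + b \<le> j} = {..j-m}" using assms by auto
  have "(\<Sum>b\<le>j. if m + b \<le> j then F b else 0) = sum F {b \<in> {..j}. m + b \<le> j}"
    by (rule sum.inter_filter[symmetric]) simp
  then show ?thesis using e by simp
qed

lemma restr2:
  fixes F :: "nat \<Rightarrow> 'a::comm_monoid_add"
  shows "(if m \<le> j then (\<Sum>b\<le>j-m. F b) else 0) = (\<Sum>b\<le>j. if m + b \<le> j then F b else 0)"
proof (cases "m \<le> j")
  case True then show ?thesis using restr[OF True, of F] by simp
next
  case False
  have "\<forall>b\<in>{..j}. (if m + b \<le> j then F b else 0) = 0" using False by auto
  then show ?thesis using False by (simp add: sum.neutral)
qed

lemma conv4:
  fixes f :: "nat \<Rightarrow> nat \<Rightarrow> nat \<Rightarrow> nat \<Rightarrow> 'a::comm_monoid_add"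
  shows "(\<Sum>a\<le>j. \<Sum>a1\<le>a. \<Sum>b1\<le>j-a. f a1 (a-a1) b1 (j-a-b1)) =
    (\<Sum>j1\<le>j. \<Sum>a1\<le>j1. \<Sum>a2\<le>j-j1. f a1 a2 (j1-a1) (j-j1-a2))"
proof -
  have "(\<Sum>a\<le>j. \<Sum>a1\<le>a. \<Sum>b1\<le>j-a. f a1 (a-a1) b1 (j-a-b1)) =
     (\<Sum>a\<le>j. \<Sum>a1\<le>a. (\<lambda>x y. \<Sum>b1\<le>j-(x+y). f x y b1 (j-(x+y)-b1)) a1 (a-a1))"
    by (rule sum.cong[OF refl])+ simp
  also have "\<dots> = (\<Sum>a1\<le>j. \<Sum>a2\<le>j. if a1+a2\<le>j then (\<Sum>b1\<le>j-(a1+a2). f a1 a2 b1 (j-(a1+a2)-b1)) else 0)"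
    by (rule tri_le)
  also have "\<dots> = (\<Sum>a1\<le>j. \<Sum>a2\<le>j. \<Sum>b1\<le>j. if a1+a2+b1\<le>j then f a1 a2 b1 (j-a1-a2-b1) else 0)"
    apply (intro sum.cong refl)
    apply (subst restr2)
    apply (intro sum.cong refl)
    apply (simp add: add_ac)
    done
  also have "\<dots> = (\<Sum>a1\<le>j. \<Sum>b1\<le>j. \<Sum>a2\<le>j. if a1+a2+b1\<le>j then f a1 a2 b1 (j-a1-a2-b1) else 0)"
    by (rule sum.cong[OF refl], rule sum.swap)
  also have "\<dots> = (\<Sum>a1\<le>j. \<Sum>b1\<le>j. if a1+b1\<le>j then (\<Sum>a2\<le>j-(a1+b1). f a1 a2 b1 (j-(a1+b1)-a2)) else 0)"
    apply (intro sum.cong refl)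
    apply (subst restr2)
    apply (intro sum.cong refl)
    apply (simp add: add_ac)
    done
  also have "\<dots> = (\<Sum>j1\<le>j. \<Sum>a1\<le>j1. (\<lambda>x y. \<Sum>a2\<le>j-(x+y). f x a2 y (j-(x+y)-a2)) a1 (j1-a1))"
    by (rule tri_le[symmetric])
  also have "\<dots> = (\<Sum>j1\<le>j. \<Sum>a1\<le>j1. \<Sum>a2\<le>j-j1. f a1 a2 (j1-a1) (j-j1-a2))"
    by (rule sum.cong[OF refl])+ simp
  finally show ?thesis .
qed

definition GG :: "nat \<Rightarrow> (nat\<Rightarrow>nat\<Rightarrow>nat\<Rightarrow>'a::comm_ring_1) \<Rightarrow> (nat\<Rightarrow>nat\<Rightarrow>nat\<Rightarrow>'a) \<Rightarrow> (nat\<Rightarrow>nat\<Rightarrow>nat\<Rightarrow>'a)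
   \<Rightarrow> nat\<Rightarrow>nat\<Rightarrow>nat\<Rightarrow>nat\<Rightarrow>'a" where
 "GG n A B E i j k m = (\<Sum>a\<le>j. HH n A B E i a k (j-a) m)"

definition comor3 :: "nat \<Rightarrow> (nat\<Rightarrow>nat\<Rightarrow>nat\<Rightarrow>nat\<Rightarrow>'a::comm_ring_1) \<Rightarrow> bool" where
 "comor3 n T \<longleftrightarrow> (\<forall>i<n. \<forall>j<n. \<forall>k<n. T i j k 0 = (if i=0 \<and> j=0 \<and> k=0 then 1 else 0) \<and>
    (\<forall>u<n. \<forall>v<n. (if u+v<n then T i j k (u+v) else 0) =
      (\<Sum>i1\<le>i. \<Sum>j1\<le>j. \<Sum>k1\<le>k. T i1 j1 k1 u * T (i-i1) (j-j1) (k-k1) v)))"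

lemma comor3_D: "comor3 n T \<Longrightarrow> i<n \<Longrightarrow> j<n \<Longrightarrow> k<n \<Longrightarrow> u<n \<Longrightarrow> v<n \<Longrightarrow>
   (if u+v<n then T i j k (u+v) else 0) =
      (\<Sum>i1\<le>i. \<Sum>j1\<le>j. \<Sum>k1\<le>k. T i1 j1 k1 u * T (i-i1) (j-j1) (k-k1) v)"
  unfolding comor3_def by blast

lemma comor3_0: "comor3 n T \<Longrightarrow> i<n \<Longrightarrow> j<n \<Longrightarrow> k<n \<Longrightarrow> T i j k 0 = (if i=0 \<and> j=0 \<and> k=0 then 1 else 0)"
  unfolding comor3_def by blast

lemma GG_comult:
  assumes A: "coalg_mor n A" and B: "coalg_mor n B" and E: "coalg_mor n E"
    and lt: "i<n" "j<n" "k<n" "u<n" "v<n"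
  shows "(if u+v<n then GG n A B E i j k (u+v) else 0) =
    (\<Sum>i1\<le>i. \<Sum>j1\<le>j. \<Sum>k1\<le>k. GG n A B E i1 j1 k1 u * GG n A B E (i-i1) (j-j1) (k-k1) v)"
proof -
  let ?H = "HH n A B E"
  have "(if u+v<n then GG n A B E i j k (u+v) else 0) =
     (\<Sum>a\<le>j. (if u+v<n then ?H i a k (j-a) (u+v) else 0))"
    by (simp add: GG_def)
  also have "\<dots> = (\<Sum>a\<le>j. \<Sum>i1\<le>i. \<Sum>a1\<le>a. \<Sum>k1\<le>k. \<Sum>b1\<le>j-a.
       ?H i1 a1 k1 b1 u * ?H (i-i1) (a-a1) (k-k1) (j-a-b1) v)"
    using lt by (intro sum.cong refl HH_comult[OF A B E]) auto
  also have "\<dots> = (\<Sum>i1\<le>i. \<Sum>a\<le>j. \<Sum>a1\<le>a. \<Sum>k1\<le>k. \<Sum>b1\<le>j-a.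
       ?H i1 a1 k1 b1 u * ?H (i-i1) (a-a1) (k-k1) (j-a-b1) v)"
    by (rule sum.swap)
  also have "\<dots> = (\<Sum>i1\<le>i. \<Sum>a\<le>j. \<Sum>k1\<le>k. \<Sum>a1\<le>a. \<Sum>b1\<le>j-a.
       ?H i1 a1 k1 b1 u * ?H (i-i1) (a-a1) (k-k1) (j-a-b1) v)"
    by (rule sum.cong[OF refl], rule sum.cong[OF refl], rule sum.swap)
  also have "\<dots> = (\<Sum>i1\<le>i. \<Sum>k1\<le>k. \<Sum>a\<le>j. \<Sum>a1\<le>a. \<Sum>b1\<le>j-a.
       ?H i1 a1 k1 b1 u * ?H (i-i1) (a-a1) (k-k1) (j-a-b1) v)"
    by (rule sum.cong[OF refl], rule sum.swap)
  also have "\<dots> = (\<Sum>i1\<le>i. \<Sum>k1\<le>k. \<Sum>j1\<le>j. \<Sum>a1\<le>j1. \<Sum>a2\<le>j-j1.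
       ?H i1 a1 k1 (j1-a1) u * ?H (i-i1) a2 (k-k1) (j-j1-a2) v)"
    by (rule sum.cong[OF refl], rule sum.cong[OF refl],
        rule conv4[where f="\<lambda>a1 a2 b1 b2. ?H i1 a1 k1 b1 u * ?H (i-i1) a2 (k-k1) b2 v" for i1 k1])
  also have "\<dots> = (\<Sum>i1\<le>i. \<Sum>j1\<le>j. \<Sum>k1\<le>k. \<Sum>a1\<le>j1. \<Sum>a2\<le>j-j1.
       ?H i1 a1 k1 (j1-a1) u * ?H (i-i1) a2 (k-k1) (j-j1-a2) v)"
    by (rule sum.cong[OF refl], rule sum.swap)
  also have "\<dots> = (\<Sum>i1\<le>i. \<Sum>j1\<le>j. \<Sum>k1\<le>k. GG n A B E i1 j1 k1 u * GG n A B E (i-i1) (j-j1) (k-k1) v)"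
    unfolding GG_def by (intro sum.cong refl) (simp add: sum_product)
  finally show ?thesis .
qed

lemma dd: fixes c :: "'a::comm_monoid_add" and n :: nat shows "0<n \<Longrightarrow> (\<Sum>h<n. \<Sum>l<n. if h=0\<and>l=0 then c else 0) = c"
proof -
  assume n: "0<n"
  have eq: "\<And>h. (\<Sum>l<n. if h=0\<and>l=0 then c else 0) = (if h = 0 then c else 0)"
    using n by (simp add: sum.delta)
  have "(\<Sum>h<n. \<Sum>l<n. if h=0\<and>l=0 then c else 0) = (\<Sum>h<n. if h = 0 then c else 0)"
    by (rule sum.cong[OF refl]) (rule eq)
  also have "\<dots> = c" using n by (simp add: sum.delta)
  finally show ?thesis .
qed

lemma GG_0:
  assumes A: "coalg_mor n A" and B: "coalg_mor n B" and E: "coalg_mor n E"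
    and lt: "i<n" "j<n" "k<n"
  shows "GG n A B E i j k 0 = (if i=0 \<and> j=0 \<and> k=0 then 1 else 0)"
proof -
  have n0: "0 < n" using lt by auto
  have "GG n A B E i j k 0 = (\<Sum>a\<le>j. \<Sum>h<n. \<Sum>l<n. A i a h * B k (j-a) l * (if h = 0 \<and> l = 0 then 1 else 0))"
    unfolding GG_def HH_def using cm_0[OF E] by (intro sum.cong refl) auto
  also have "\<dots> = (\<Sum>a\<le>j. \<Sum>h<n. \<Sum>l<n. if h = 0 \<and> l = 0 then A i a 0 * B k (j-a) 0 else 0)"
    by (intro sum.cong refl) auto
  also have "\<dots> = (\<Sum>a\<le>j. A i a 0 * B k (j-a) 0)"
    using n0 by (intro sum.cong refl dd)
  also have "\<dots> = (\<Sum>a\<le>j. (if i = 0 \<and> a = 0 then 1 else 0) * (if k = 0 \<and> j - a = 0 then 1 else 0))"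
    using cm_0[OF A] cm_0[OF B] lt by (intro sum.cong refl) auto
  also have "\<dots> = (\<Sum>a\<le>j. if a = 0 then (if i=0 \<and> j=0 \<and> k=0 then 1 else 0) else 0)"
    by (intro sum.cong refl) auto
  also have "\<dots> = (if i=0 \<and> j=0 \<and> k=0 then 1 else 0)"
    by (simp add: sum.delta)
  finally show ?thesis .
qed

lemma GG_comor3:
  assumes A: "coalg_mor n A" and B: "coalg_mor n B" and E: "coalg_mor n E"
  shows "comor3 n (GG n A B E)"
  unfolding comor3_def
proof (intro allI impI conjI)
  fix i j k u v assume "i<n" "j<n" "k<n"
  then show "GG n A B E i j k 0 = (if i = 0 \<and> j = 0 \<and> k = 0 then 1 else 0)" by (rule GG_0[OF A B E])
  assume "u<n" "v<n"
  show "(if u + v < n then GG n A B E i j k (u + v) else 0) =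
      (\<Sum>i1\<le>i. \<Sum>j1\<le>j. \<Sum>k1\<le>k. GG n A B E i1 j1 k1 u * GG n A B E (i - i1) (j - j1) (k - k1) v)"
    by (rule GG_comult[OF A B E \<open>i<n\<close> \<open>j<n\<close> \<open>k<n\<close> \<open>u<n\<close> \<open>v<n\<close>])
qed

lemma comor3_swap:
  assumes "comor3 n T"
  shows "comor3 n (\<lambda>i j k m. T i k j m)"
  unfolding comor3_def
proof (intro allI impI conjI)
  fix i j k u v assume lt: "i<n" "j<n" "k<n" 
  show "T i k j 0 = (if i = 0 \<and> j = 0 \<and> k = 0 then 1 else 0)" using comor3_0[OF assms lt(1,3,2)] by auto
  assume "u<n" "v<n"
  then have "(if u + v < n then T i k j (u + v) else 0) =
      (\<Sum>i1\<le>i. \<Sum>k1\<le>k. \<Sum>j1\<le>j. T i1 k1 j1 u * T (i-i1) (k-k1) (j-j1) v)"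
    using comor3_D[OF assms lt(1,3,2)] by blast
  also have "\<dots> = (\<Sum>i1\<le>i. \<Sum>j1\<le>j. \<Sum>k1\<le>k. T i1 k1 j1 u * T (i-i1) (k-k1) (j-j1) v)"
    by (rule sum.cong[OF refl], rule sum.swap)
  finally show "(if u + v < n then T i k j (u + v) else 0) =
      (\<Sum>i1\<le>i. \<Sum>j1\<le>j. \<Sum>k1\<le>k. T i1 k1 j1 u * T (i-i1) (k-k1) (j-j1) v)" .
qed

lemma comor3_unique:
  assumes T: "comor3 n T" and S: "comor3 n S"
    and one: "\<forall>i<n. \<forall>j<n. \<forall>k<n. T i j k 1 = S i j k 1"
  shows "\<forall>i<n. \<forall>j<n. \<forall>k<n. T i j k m = S i j k m \<or> \<not> m < n"
proof (induction m rule: less_induct)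
  case (less m)
  show ?case
  proof (intro allI impI)
    fix i j k assume lt: "i<n" "j<n" "k<n"
    show "T i j k m = S i j k m \<or> \<not> m < n"
    proof (cases "m < n")
      case False then show ?thesis by simp
    next
      case True
      consider "m = 0" | "m = 1" | "m \<ge> 2" by linarith
      then show ?thesis
      proof cases
        case 1 then show ?thesis using comor3_0[OF T lt] comor3_0[OF S lt] by simp
      next
        case 2 then show ?thesis using one lt by simp
      next
        case 3
        have m1: "1 + (m-1) = m" using 3 by simp
        have lt1: "1 < n" "m - 1 < n" using 3 True by auto
        have "T i j k m = (\<Sum>i1\<le>i. \<Sum>j1\<le>j. \<Sum>k1\<le>k. T i1 j1 k1 1 * T (i-i1) (j-j1) (k-k1) (m-1))"
          using comor3_D[OF T lt lt1] True by (simp only: m1) simp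
        also have "\<dots> = (\<Sum>i1\<le>i. \<Sum>j1\<le>j. \<Sum>k1\<le>k. S i1 j1 k1 1 * S (i-i1) (j-j1) (k-k1) (m-1))"
        proof (intro sum.cong refl)
          fix i1 j1 k1 assume "i1 \<in> {..i}" "j1 \<in> {..j}" "k1 \<in> {..k}"
          then have l2: "i1<n" "j1<n" "k1<n" "i-i1<n" "j-j1<n" "k-k1<n" using lt by auto
          have "m - 1 < m" using 3 by simp
          then show "T i1 j1 k1 1 * T (i-i1) (j-j1) (k-k1) (m-1) = S i1 j1 k1 1 * S (i-i1) (j-j1) (k-k1) (m-1)"
            using less.IH[of "m-1"] one l2 lt1 by metis
        qed
        also have "\<dots> = S i j k m"
          using comor3_D[OF S lt lt1] True by (simp only: m1) simp
        finally show ?thesis by simp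
      qed
    qed
  qed
qed

lemma sum_single:
  assumes "finite S" "y \<in> S" "\<forall>x\<in>S. x \<noteq> y \<longrightarrow> f x = 0"
  shows "sum f S = f y"
proof -
  have "sum f {y} = sum f S" using assms by (intro sum.mono_neutral_left) auto
  then show ?thesis by simp
qed

lemma sum_two:
  assumes "finite S" "y \<in> S" "z \<in> S" "y \<noteq> z" "\<forall>x\<in>S. x \<noteq> y \<longrightarrow> x \<noteq> z \<longrightarrow> f x = 0"
  shows "sum f S = f y + f z"
proof -
  have "sum f {y, z} = sum f S" using assms by (intro sum.mono_neutral_left) auto
  then show ?thesis using assms by simp
qed

lemma L0:
  fixes X :: "nat \<Rightarrow> nat \<Rightarrow> nat \<Rightarrow> 'a::field"
  assumes X: "coalg_mor n X" and n: "2 \<le> n" and m: "m < n"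
  shows "X 0 0 m = (if m = 0 then 1 else 0)"
proof -
  have rec: "(if u+v<n then X 0 0 (u+v) else 0) = X 0 0 u * X 0 0 v" if "u<n" "v<n" for u v
    using cm_D[OF X _ _ that, of 0 0] n by simp
  have pw: "X 0 0 m = X 0 0 1 ^ m" if "m<n" for m
    using that
  proof (induction m)
    case 0 then show ?case using cm_0[OF X, of 0 0] by simp
  next
    case (Suc m)
    then have "X 0 0 (1+m) = X 0 0 1 * X 0 0 m" using rec[of 1 m] n by simp
    then show ?case using Suc by simp
  qed
  have "X 0 0 1 * X 0 0 (n-1) = 0" using rec[of 1 "n-1"] n by simp
  then have "X 0 0 1 ^ n = 0" using pw[of "n-1"] n
    by (metis Suc_diff_1 diff_less less_le_trans order_less_le_trans pos2 power_Suc zero_less_one)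
  then have z: "X 0 0 1 = 0" by simp
  show ?thesis using pw[OF m] z by simp
qed

lemma C_van:
  fixes X :: "nat \<Rightarrow> nat \<Rightarrow> nat \<Rightarrow> 'a::comm_ring_1"
  assumes X: "coalg_mor n X" and r: "1 \<le> r" and z: "\<forall>c<r. X 0 c 1 = 0"
  shows "h < n \<Longrightarrow> a < h \<Longrightarrow> c < n \<Longrightarrow> c < r * (h - a) \<Longrightarrow> X a c h = 0"
proof (induction h arbitrary: a c)
  case 0 then show ?case by simp
next
  case (Suc h)
  have "X a c (1 + h) = (\<Sum>a1\<le>a. \<Sum>c1\<le>c. X a1 c1 1 * X (a - a1) (c - c1) h)"
    using cm_D[OF X, of a c 1 h] Suc.prems by simp
  also have "\<dots> = 0"
  proof (intro sum.neutral ballI)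
    fix a1 c1 assume a1: "a1 \<in> {..a}" and c1: "c1 \<in> {..c}"
    show "X a1 c1 1 * X (a - a1) (c - c1) h = 0"
    proof (cases "a1 = 0")
      case True
      show ?thesis
      proof (cases "c1 < r")
        case True then show ?thesis using z \<open>a1 = 0\<close> by simp
      next
        case False
        have e: "r * (Suc h - a) = r * (h - a) + r" if "a \<le> h"
          using that by (simp add: Suc_diff_le)
        have "a < h"
        proof (rule ccontr)
          assume "\<not> a < h" then have "a = h" using Suc.prems by simp
          then show False using Suc.prems False c1 by simp
        qed
        then have "c - c1 < r * (h - a)" using e[of] False c1 Suc.prems by auto
        then have "X a (c - c1) h = 0" using Suc.IH[of a "c - c1"] \<open>a < h\<close> Suc.prems by simp
        then show ?thesis using True by simp
      qed
    next
      case False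
      have h1: "a - a1 < h" using False Suc.prems a1 by auto
      have "Suc h - a \<le> h - (a - a1)" using False Suc.prems a1 by auto
      then have "r * (Suc h - a) \<le> r * (h - (a - a1))" by (rule mult_le_mono2)
      then have "c - c1 < r * (h - (a - a1))" using Suc.prems by linarith
      then have "X (a - a1) (c - c1) h = 0" using Suc.IH[OF _ h1] Suc.prems by simp
      then show ?thesis by simp
    qed
  qed
  finally show ?case by simp
qed

lemma X001:
  fixes X :: "nat \<Rightarrow> nat \<Rightarrow> nat \<Rightarrow> 'a::field"
  assumes X: "coalg_mor n X" and n: "2 \<le> n"
  shows "X 0 0 1 = 0"
  using L0[OF X n, of 1] n by simp

lemma D1:
  fixes X :: "nat \<Rightarrow> nat \<Rightarrow> nat \<Rightarrow> 'a::field"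
  assumes X: "coalg_mor n X" and n: "2 \<le> n"
  shows "a < n \<Longrightarrow> X a 0 a = X 1 0 1 ^ a"
proof (induction a)
  case 0 then show ?case using cm_0[OF X, of 0 0] by simp
next
  case (Suc a)
  have z: "\<forall>c<1. X 0 c 1 = 0" using X001[OF X n] by simp
  have "X (Suc a) 0 (1 + a) = (\<Sum>a1\<le>Suc a. \<Sum>c1\<le>0. X a1 c1 1 * X (Suc a - a1) (0 - c1) a)"
    using cm_D[OF X, of "Suc a" 0 1 a] Suc.prems by simp
  also have "\<dots> = (\<Sum>a1\<le>Suc a. X a1 0 1 * X (Suc a - a1) 0 a)" by simp
  also have "\<dots> = X 1 0 1 * X (Suc a - 1) 0 a"
  proof (rule sum_single)
    show "\<forall>x\<in>{..Suc a}. x \<noteq> 1 \<longrightarrow> X x 0 1 * X (Suc a - x) 0 a = 0"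
    proof (intro ballI impI)
      fix x assume x: "x \<in> {..Suc a}" "x \<noteq> 1"
      show "X x 0 1 * X (Suc a - x) 0 a = 0"
      proof (cases "x = 0")
        case True then show ?thesis using X001[OF X n] by simp
      next
        case False
        then have "X (Suc a - x) 0 a = 0"
          using C_van[OF X _ z, of a "Suc a - x" 0] x Suc.prems by auto
        then show ?thesis by simp
      qed
    qed
  qed auto
  finally show ?case using Suc by simp
qed

lemma D2:
  fixes X :: "nat \<Rightarrow> nat \<Rightarrow> nat \<Rightarrow> 'a::field"
  assumes X: "coalg_mor n X" and n: "2 \<le> n" and r: "1 \<le> r" "r < n" and z: "\<forall>c<r. X 0 c 1 = 0"
  shows "Suc g < n \<Longrightarrow> X g r (Suc g) = of_nat (Suc g) * X 1 0 1 ^ g * X 0 r 1"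
proof (induction g)
  case 0 then show ?case by simp
next
  case (Suc g)
  let ?T = "\<lambda>a1 c1. X a1 c1 1 * X (Suc g - a1) (r - c1) (Suc g)"
  have "X (Suc g) r (1 + Suc g) = (\<Sum>a1\<le>Suc g. \<Sum>c1\<le>r. ?T a1 c1)"
    using cm_D[OF X, of "Suc g" r 1 "Suc g"] Suc.prems r by simp
  also have "\<dots> = (\<Sum>c1\<le>r. ?T 0 c1) + (\<Sum>c1\<le>r. ?T 1 c1)"
  proof (rule sum_two)
    show "\<forall>x\<in>{..Suc g}. x \<noteq> 0 \<longrightarrow> x \<noteq> 1 \<longrightarrow> (\<Sum>c1\<le>r. ?T x c1) = 0"
    proof (intro ballI impI sum.neutral)
      fix x c1 assume x: "x \<in> {..Suc g}" "x \<noteq> 0" "x \<noteq> 1" and c1: "c1 \<in> {..r}"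
      have "r - c1 < r * (Suc g - (Suc g - x))"
      proof -
        have e1: "r * (Suc g - (Suc g - x)) = r * x" using x by auto
        have e2: "r * 2 \<le> r * x" using x by (intro mult_le_mono2) auto
        show ?thesis using e1 e2 r by linarith
      qed
      then have "X (Suc g - x) (r - c1) (Suc g) = 0"
        using C_van[OF X r(1) z, of "Suc g" "Suc g - x" "r - c1"] x Suc.prems r by auto
      then show "?T x c1 = 0" by simp
    qed
  qed auto
  also have "(\<Sum>c1\<le>r. ?T 0 c1) = ?T 0 r"
    by (rule sum_single) (use z in auto)
  also have "(\<Sum>c1\<le>r. ?T 1 c1) = ?T 1 0"
  proof (rule sum_single)
    show "\<forall>x\<in>{..r}. x \<noteq> 0 \<longrightarrow> ?T 1 x = 0"
    proof (intro ballI impI)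
      fix x assume x: "x \<in> {..r}" "x \<noteq> 0"
      have "X g (r - x) (Suc g) = 0"
        using C_van[OF X r(1) z, of "Suc g" g "r - x"] x Suc.prems r by auto
      then show "?T 1 x = 0" by simp
    qed
  qed auto
  also have "?T 0 r = X 0 r 1 * X 1 0 1 ^ Suc g"
    using D1[OF X n, of "Suc g"] Suc.prems by simp
  also have "?T 1 0 = X 1 0 1 * (of_nat (Suc g) * X 1 0 1 ^ g * X 0 r 1)"
    using Suc.IH Suc.prems by simp
  finally show ?case by (simp add: algebra_simps)
qed

lemma nil_step:
  fixes X :: "nat \<Rightarrow> nat \<Rightarrow> nat \<Rightarrow> 'a::field_char_0"
  assumes X: "coalg_mor n X" and n: "2 \<le> n" and r: "1 \<le> r" "r < n" and z: "\<forall>c<r. X 0 c 1 = 0"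
    and nz: "X 1 0 1 \<noteq> 0"
  shows "X 0 r 1 = 0"
proof -
  obtain N where N: "n = Suc (Suc N)" using n by (metis add_2_eq_Suc le_Suc_ex)
  let ?T = "\<lambda>a c. X a c (Suc N) * X (Suc N - a) (r - c) 1"
  have "0 = (\<Sum>a\<le>Suc N. \<Sum>c\<le>r. ?T a c)"
    using cm_D[OF X, of "Suc N" r "Suc N" 1] N r by simp
  also have "\<dots> = (\<Sum>c\<le>r. ?T (Suc N) c) + (\<Sum>c\<le>r. ?T N c)"
  proof (rule sum_two)
    show "\<forall>x\<in>{..Suc N}. x \<noteq> Suc N \<longrightarrow> x \<noteq> N \<longrightarrow> (\<Sum>c\<le>r. ?T x c) = 0"
    proof (intro ballI impI sum.neutral)
      fix x c assume x: "x \<in> {..Suc N}" "x \<noteq> Suc N" "x \<noteq> N" and c: "c \<in> {..r}"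
      have "c < r * (Suc N - x)"
      proof -
        have "2 \<le> Suc N - x" using x by auto
        then have e: "r * 2 \<le> r * (Suc N - x)" by (rule mult_le_mono2)
        have "c \<le> r" using c by simp
        then show ?thesis using e r by linarith
      qed
      then have "X x c (Suc N) = 0"
        using C_van[OF X r(1) z, of "Suc N" x c] x N r c by auto
      then show "?T x c = 0" by simp
    qed
  qed auto
  also have "(\<Sum>c\<le>r. ?T (Suc N) c) = ?T (Suc N) 0"
    by (rule sum_single) (use z in auto)
  also have "(\<Sum>c\<le>r. ?T N c) = ?T N r"
  proof (rule sum_single)
    show "\<forall>x\<in>{..r}. x \<noteq> r \<longrightarrow> ?T N x = 0"
    proof (intro ballI impI)
      fix x assume x: "x \<in> {..r}" "x \<noteq> r"
      have "X N x (Suc N) = 0"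
        using C_van[OF X r(1) z, of "Suc N" N x] x N r by auto
      then show "?T N x = 0" by simp
    qed
  qed auto
  also have "?T (Suc N) 0 = X 1 0 1 ^ Suc N * X 0 r 1"
    using D1[OF X n, of "Suc N"] N by simp
  also have "?T N r = of_nat (Suc N) * X 1 0 1 ^ N * X 0 r 1 * X 1 0 1"
    using D2[OF X n r z, of N] N by simp
  finally have "0 = of_nat (Suc (Suc N)) * X 1 0 1 ^ Suc N * X 0 r 1"
    by (simp add: algebra_simps)
  then show ?thesis using nz by (simp del: of_nat_Suc)
qed

lemma X0j1:
  fixes X :: "nat \<Rightarrow> nat \<Rightarrow> nat \<Rightarrow> 'a::field_char_0"
  assumes X: "coalg_mor n X" and n: "2 \<le> n" and nz: "X 1 0 1 \<noteq> 0"
  shows "j < n \<Longrightarrow> X 0 j 1 = 0"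
proof (induction j rule: less_induct)
  case (less j)
  show ?case
  proof (cases "j = 0")
    case True then show ?thesis using X001[OF X n] by simp
  next
    case False
    then show ?thesis using nil_step[OF X n _ less.prems _ nz] less.IH less.prems by auto
  qed
qed

lemma tri_van:
  fixes X :: "nat \<Rightarrow> nat \<Rightarrow> nat \<Rightarrow> 'a::field_char_0"
  assumes X: "coalg_mor n X" and n: "2 \<le> n" and nz: "X 1 0 1 \<noteq> 0"
    and lt: "a < n" "h < n" "i < h"
  shows "X i a h = 0"
proof -
  have z: "\<forall>c<n. X 0 c 1 = 0" using X0j1[OF X n nz] by auto
  have "a < n * (h - i)"
  proof -
    have e: "n * 1 \<le> n * (h - i)" using lt by (intro mult_le_mono2) auto
    show ?thesis using e lt by linarith
  qed
  then show ?thesis using C_van[OF X _ z, of h i a] lt n by auto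
qed

lemma refl_sum: "(\<Sum>s\<le>j. F s (j - s)) = (\<Sum>s\<le>(j::nat). F (j - s) s)"
  by (rule sum.reindex_bij_witness[where i="\<lambda>s. j-s" and j="\<lambda>s. j-s"]) auto

lemma swe_swap: "swe n b F = swe n b (\<lambda>s t. F t s)"
  unfolding swe_def
  by (rule ext, intro sum.cong refl arg_cong2[where f="(*)"] refl_sum)

lemma swap3:
  "(\<Sum>x\<in>X. \<Sum>p\<in>P. \<Sum>q\<in>Q. \<Sum>r\<in>R. f x p q r) =
   (\<Sum>p\<in>P. \<Sum>q\<in>Q. \<Sum>r\<in>R. \<Sum>x\<in>X. f x p q r)"
  apply (rule trans[OF sum.swap])
  apply (rule sum.cong[OF refl])
  apply (rule trans[OF sum.swap])
  apply (rule sum.cong[OF refl])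
  apply (rule sum.swap)
  done

lemma swap23:
  "(\<Sum>x1\<in>X1. \<Sum>x2\<in>X2. \<Sum>y1\<in>Y1. \<Sum>y2\<in>Y2. \<Sum>y3\<in>Y3. f x1 x2 y1 y2 y3) =
   (\<Sum>y1\<in>Y1. \<Sum>y2\<in>Y2. \<Sum>y3\<in>Y3. \<Sum>x1\<in>X1. \<Sum>x2\<in>X2. f x1 x2 y1 y2 y3)"
proof -
  have 1: "\<And>x1. (\<Sum>x2\<in>X2. \<Sum>y1\<in>Y1. \<Sum>y2\<in>Y2. \<Sum>y3\<in>Y3. f x1 x2 y1 y2 y3) =
     (\<Sum>y1\<in>Y1. \<Sum>y2\<in>Y2. \<Sum>y3\<in>Y3. \<Sum>x2\<in>X2. f x1 x2 y1 y2 y3)" by (rule swap3)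
  have 2: "(\<Sum>x1\<in>X1. \<Sum>y1\<in>Y1. \<Sum>y2\<in>Y2. \<Sum>y3\<in>Y3. \<Sum>x2\<in>X2. f x1 x2 y1 y2 y3) =
     (\<Sum>y1\<in>Y1. \<Sum>y2\<in>Y2. \<Sum>y3\<in>Y3. \<Sum>x1\<in>X1. \<Sum>x2\<in>X2. f x1 x2 y1 y2 y3)" by (rule swap3)
  show ?thesis by (simp only: 1 2)
qed

lemma prod1:
  fixes f :: "nat \<Rightarrow> 'a::comm_ring_1"
  shows "(\<Sum>x\<in>X. f x) * (\<Sum>y\<in>Y. g y) * e = (\<Sum>x\<in>X. \<Sum>y\<in>Y. f x * g y * e)"
proof -
  have "(\<Sum>x\<in>X. f x) * (\<Sum>y\<in>Y. g y) * e = (\<Sum>x\<in>X. f x * (\<Sum>y\<in>Y. g y) * e)"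
    by (simp only: sum_distrib_right)
  also have "\<dots> = (\<Sum>x\<in>X. \<Sum>y\<in>Y. f x * g y * e)"
    by (intro sum.cong refl) (simp only: sum_distrib_left sum_distrib_right)
  finally show ?thesis .
qed

lemma bop_xbR:
  fixes A :: "nat \<Rightarrow> nat \<Rightarrow> nat \<Rightarrow> 'a::comm_ring_1"
  assumes "s < n"
  shows "bop n A a (xb s) = (\<lambda>h. if h < n then (\<Sum>i<n. a i * A i s h) else 0)"
  unfolding bop_def xb_def using assms
  by (auto intro!: ext sum.cong simp: if_distrib[of "\<lambda>x. _ * x"] if_distrib[of "\<lambda>x. x * _"] sum.delta cong: if_cong)

lemma swe_form1:
  fixes A B E :: "nat \<Rightarrow> nat \<Rightarrow> nat \<Rightarrow> 'a::comm_ring_1"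
  shows "swe n b (\<lambda>s t. bop n E (bop n A a s) (bop n B c t)) m =
    (if m < n then (\<Sum>i<n. \<Sum>j<n. \<Sum>k<n. a i * b j * c k * GG n A B E i j k m) else 0)"
proof (cases "m < n")
  case False
  then show ?thesis unfolding swe_def by (simp add: bop_def)
next
  case True
  have "swe n b (\<lambda>s t. bop n E (bop n A a s) (bop n B c t)) m =
     (\<Sum>j<n. b j * (\<Sum>s\<le>j. \<Sum>h<n. \<Sum>l<n. (\<Sum>i<n. a i * A i s h) * (\<Sum>k<n. c k * B k (j - s) l) * E h l m))"
    unfolding swe_def using True
    by (intro sum.cong refl arg_cong2[where f="(*)"]) (simp add: bop_xbR, simp add: bop_def)
  also have "\<dots> = (\<Sum>j<n. \<Sum>s\<le>j. \<Sum>h<n. \<Sum>l<n. \<Sum>i<n. \<Sum>k<n. (a i * b j * c k) * (A i s h * B k (j - s) l * E h l m))"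
    apply (rule sum.cong[OF refl])
    apply (simp only: prod1)
    apply (simp only: sum_distrib_left)
    apply (intro sum.cong refl)
    apply (simp add: mult_ac)
    done
  also have "\<dots> = (\<Sum>j<n. \<Sum>i<n. \<Sum>k<n. \<Sum>s\<le>j. \<Sum>h<n. \<Sum>l<n. (a i * b j * c k) * (A i s h * B k (j - s) l * E h l m))"
    by (rule sum.cong[OF refl], rule swap23[symmetric])
  also have "\<dots> = (\<Sum>j<n. \<Sum>i<n. \<Sum>k<n. a i * b j * c k * GG n A B E i j k m)"
    unfolding GG_def HH_def by (intro sum.cong refl) (simp only: sum_distrib_left)
  also have "\<dots> = (\<Sum>i<n. \<Sum>j<n. \<Sum>k<n. a i * b j * c k * GG n A B E i j k m)"
    by (rule sum.swap)
  finally show ?thesis using True by simp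
qed

lemma swe_form2:
  fixes A B E :: "nat \<Rightarrow> nat \<Rightarrow> nat \<Rightarrow> 'a::comm_ring_1"
  shows "swe n c (\<lambda>s t. bop n E (bop n A a t) (bop n B b s)) m =
    (if m < n then (\<Sum>i<n. \<Sum>j<n. \<Sum>k<n. a i * b j * c k * GG n A B E i k j m) else 0)"
proof -
  have "swe n c (\<lambda>s t. bop n E (bop n A a t) (bop n B b s)) m =
      swe n c (\<lambda>s t. bop n E (bop n A a s) (bop n B b t)) m"
    by (subst swe_swap) simp
  also have "\<dots> = (if m < n then (\<Sum>i<n. \<Sum>k<n. \<Sum>j<n. a i * c k * b j * GG n A B E i k j m) else 0)"
    by (rule swe_form1)
  also have "\<dots> = (if m < n then (\<Sum>i<n. \<Sum>j<n. \<Sum>k<n. a i * b j * c k * GG n A B E i k j m) else 0)"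
    by (simp only: mult_ac, subst (2) sum.swap, simp only: mult_ac)
  finally show ?thesis .
qed

lemma xs:
  fixes G :: "nat \<Rightarrow> 'a::comm_ring_1"
  assumes "k < n"
  shows "(\<Sum>k'<n. xb k k' * G k') = G k"
  by (rule trans[OF sum_single[of _ k]]) (use assms in \<open>auto simp: xb_def\<close>)

lemma xb_sum3:
  fixes F :: "nat \<Rightarrow> nat \<Rightarrow> nat \<Rightarrow> 'a::comm_ring_1"
  assumes "i<n" "j<n" "k<n"
  shows "(\<Sum>i'<n. \<Sum>j'<n. \<Sum>k'<n. xb i i' * xb j j' * xb k k' * F i' j' k') = F i j k"
proof -
  have "(\<Sum>i'<n. \<Sum>j'<n. \<Sum>k'<n. xb i i' * xb j j' * xb k k' * F i' j' k') =
    (\<Sum>i'<n. xb i i' * (\<Sum>j'<n. xb j j' * (\<Sum>k'<n. xb k k' * F i' j' k')))"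
    by (simp add: sum_distrib_left mult.assoc)
  also have "\<dots> = F i j k" using assms by (simp add: xs)
  finally show ?thesis .
qed

lemma inC_xb: "i < n \<Longrightarrow> inC n (xb i)"
  by (simp add: inC_def xb_def)

lemma swe_xb0: "0 < n \<Longrightarrow> swe n (xb 0) F = F (xb 0) (xb 0)"
  unfolding swe_def xb_def
  by (auto intro!: ext simp: if_distrib[of "\<lambda>x. x * _"] sum.delta cong: if_cong)

lemma bop_11:
  fixes X Y :: "nat \<Rightarrow> nat \<Rightarrow> nat \<Rightarrow> 'a::field"
  assumes X: "coalg_mor n X" and n: "2 \<le> n"
  shows "bop n Y (bop n X (xb 1) (xb 0)) (xb 0) 1 = X 1 0 1 * Y 1 0 1"
proof -
  have "bop n X (xb 1) (xb 0) = (\<lambda>h. if h < n then X 1 0 h else 0)"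
  proof -
    have n0: "0 < n" using n by simp
    have x1: "(\<Sum>i<n. xb 1 i * (G i::'a)) = G 1" for G using xs[of 1 n G] n by simp
    show ?thesis by (simp only: bop_xbR[OF n0] x1)
  qed
  then have "bop n Y (bop n X (xb 1) (xb 0)) (xb 0) 1 = (\<Sum>i<n. (if i < n then X 1 0 i else 0) * Y i 0 1)"
    using n by (simp add: bop_xbR)
  also have "\<dots> = (\<Sum>i<n. X 1 0 i * Y i 0 1)" by (intro sum.cong refl) auto
  also have "\<dots> = X 1 0 1 * Y 1 0 1"
  proof (rule sum_single)
    have z: "\<forall>c<1. X 0 c 1 = 0" using X001[OF X n] by simp
    show "\<forall>x\<in>{..<n}. x \<noteq> 1 \<longrightarrow> X 1 0 x * Y x 0 1 = 0"
    proof (intro ballI impI)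
      fix x assume x: "x \<in> {..<n}" "x \<noteq> 1"
      show "X 1 0 x * Y x 0 1 = 0"
      proof (cases "x = 0")
        case True then show ?thesis using cm_0[OF X, of 1 0] n by simp
      next
        case False
        then have "X 1 0 x = 0" using C_van[OF X _ z, of x 1 0] x n by auto
        then show ?thesis by simp
      qed
    qed
  qed (use n in auto)
  finally show ?thesis .
qed

lemma reg_nz:
  fixes p d :: "nat \<Rightarrow> nat \<Rightarrow> nat \<Rightarrow> 'a::field"
  assumes reg: "regular_qmagma n p d" and n: "2 \<le> n"
  shows "p 1 0 1 \<noteq> 0" "d 1 0 1 \<noteq> 0"
proof -
  from reg obtain Q R where p: "coalg_mor n p" and d: "coalg_mor n d" and
    eqs: "\<forall>a b. inC n a \<longrightarrow> inC n b \<longrightarrow>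
           swe n b (\<lambda>s t. bop n p (bop n Q a s) t) = (\<lambda>k. eps b * a k) \<and>
           swe n b (\<lambda>s t. bop n Q (bop n p a s) t) = (\<lambda>k. eps b * a k) \<and>
           swe n b (\<lambda>s t. bop n R (bop n d a t) s) = (\<lambda>k. eps b * a k) \<and>
           swe n b (\<lambda>s t. bop n d (bop n R a t) s) = (\<lambda>k. eps b * a k)"
    unfolding regular_qmagma_def by blast
  have i1: "inC n (xb 1)" and i0: "inC n (xb 0)" using n by (auto intro: inC_xb)
  have n0: "0 < n" using n by simp
  have one: "eps (xb 0) * xb 1 1 = (1::'a)" by (simp add: eps_def xb_def)
  have "swe n (xb 0) (\<lambda>s t. bop n Q (bop n p (xb 1) s) t) 1 = eps (xb 0) * xb 1 1"
    using eqs i1 i0 by metis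
  then have e1: "bop n Q (bop n p (xb 1) (xb 0)) (xb 0) 1 = 1"
    by (simp only: swe_xb0[OF n0] one)
  have "swe n (xb 0) (\<lambda>s t. bop n R (bop n d (xb 1) t) s) 1 = eps (xb 0) * xb 1 1"
    using eqs i1 i0 by metis
  then have e2: "bop n R (bop n d (xb 1) (xb 0)) (xb 0) 1 = 1"
    by (simp only: swe_xb0[OF n0] one)
  show "p 1 0 1 \<noteq> 0" using e1 bop_11[OF p n, of Q] by auto
  show "d 1 0 1 \<noteq> 0" using e2 bop_11[OF d n, of R] by auto
qed

lemma eq_iff:
  fixes A B E A' B' E' :: "nat \<Rightarrow> nat \<Rightarrow> nat \<Rightarrow> 'a::comm_ring_1"
  assumes A: "coalg_mor n A" and B: "coalg_mor n B" and E: "coalg_mor n E"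
    and A': "coalg_mor n A'" and B': "coalg_mor n B'" and E': "coalg_mor n E'"
    and n: "2 \<le> n"
  shows "(\<forall>a b c. inC n a \<longrightarrow> inC n b \<longrightarrow> inC n c \<longrightarrow>
            swe n b (\<lambda>s t. bop n E (bop n A a s) (bop n B c t)) =
            swe n c (\<lambda>s t. bop n E' (bop n A' a t) (bop n B' b s)))
      \<longleftrightarrow> (\<forall>i<n. \<forall>j<n. \<forall>k<n. GG n A B E i j k 1 = GG n A' B' E' i k j 1)"
proof
  assume H: "\<forall>a b c. inC n a \<longrightarrow> inC n b \<longrightarrow> inC n c \<longrightarrow>
            swe n b (\<lambda>s t. bop n E (bop n A a s) (bop n B c t)) =
            swe n c (\<lambda>s t. bop n E' (bop n A' a t) (bop n B' b s))"
  show "\<forall>i<n. \<forall>j<n. \<forall>k<n. GG n A B E i j k 1 = GG n A' B' E' i k j 1"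
  proof (intro allI impI)
    fix i j k assume lt: "i<n" "j<n" "k<n"
    have "swe n (xb j) (\<lambda>s t. bop n E (bop n A (xb i) s) (bop n B (xb k) t)) 1 =
          swe n (xb k) (\<lambda>s t. bop n E' (bop n A' (xb i) t) (bop n B' (xb j) s)) 1"
      using H lt inC_xb by metis
    then have "(\<Sum>i'<n. \<Sum>j'<n. \<Sum>k'<n. xb i i' * xb j j' * xb k k' * GG n A B E i' j' k' 1) =
               (\<Sum>i'<n. \<Sum>j'<n. \<Sum>k'<n. xb i i' * xb j j' * xb k k' * GG n A' B' E' i' k' j' 1)"
      using n by (simp only: swe_form1 swe_form2) simp
    then show "GG n A B E i j k 1 = GG n A' B' E' i k j 1"
      using xb_sum3[OF lt, of "\<lambda>i j k. GG n A B E i j k 1"]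
        xb_sum3[OF lt, of "\<lambda>i j k. GG n A' B' E' i k j 1"] by simp
  qed
next
  assume H: "\<forall>i<n. \<forall>j<n. \<forall>k<n. GG n A B E i j k 1 = GG n A' B' E' i k j 1"
  have all: "\<forall>i<n. \<forall>j<n. \<forall>k<n. GG n A B E i j k m = (\<lambda>i j k m. GG n A' B' E' i k j m) i j k m \<or> \<not> m < n" for m
    by (rule comor3_unique[OF GG_comor3[OF A B E] comor3_swap[OF GG_comor3[OF A' B' E']]]) (use H in simp)
  show "\<forall>a b c. inC n a \<longrightarrow> inC n b \<longrightarrow> inC n c \<longrightarrow>
            swe n b (\<lambda>s t. bop n E (bop n A a s) (bop n B c t)) =
            swe n c (\<lambda>s t. bop n E' (bop n A' a t) (bop n B' b s))"
  proof (intro allI impI ext)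
    fix a b c m
    show "swe n b (\<lambda>s t. bop n E (bop n A a s) (bop n B c t)) m =
            swe n c (\<lambda>s t. bop n E' (bop n A' a t) (bop n B' b s)) m"
    proof (cases "m < n")
      case True
      then show ?thesis unfolding swe_form1 swe_form2 using all[of m]
        by (simp add: True)
    next
      case False
      then show ?thesis unfolding swe_form1 swe_form2 by simp
    qed
  qed
qed

lemma trunc_sum:
  fixes F :: "nat \<Rightarrow> 'a::comm_monoid_add"
  assumes "i < n" "\<forall>h. i < h \<longrightarrow> h < n \<longrightarrow> F h = 0"
  shows "(\<Sum>h<n. F h) = (\<Sum>h\<le>i. F h)"
  by (rule sum.mono_neutral_right) (use assms in auto)

lemma GG_trunc:
  fixes A B E :: "nat \<Rightarrow> nat \<Rightarrow> nat \<Rightarrow> 'a::field_char_0"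
  assumes A: "coalg_mor n A" and B: "coalg_mor n B" and n: "2 \<le> n"
    and nA: "A 1 0 1 \<noteq> 0" and nB: "B 1 0 1 \<noteq> 0"
    and lt: "i<n" "j<n" "k<n"
  shows "GG n A B E i j k 1 = (\<Sum>a\<le>j. \<Sum>h\<le>i. \<Sum>l\<le>k. A i a h * B k (j - a) l * E h l 1)"
  unfolding GG_def HH_def
proof (rule sum.cong[OF refl])
  fix a assume a: "a \<in> {..j}"
  have "(\<Sum>h<n. \<Sum>l<n. A i a h * B k (j - a) l * E h l 1) = (\<Sum>h\<le>i. \<Sum>l<n. A i a h * B k (j - a) l * E h l 1)"
    using tri_van[OF A n nA] a lt by (intro trunc_sum) auto
  also have "\<dots> = (\<Sum>h\<le>i. \<Sum>l\<le>k. A i a h * B k (j - a) l * E h l 1)"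
    using tri_van[OF B n nB] a lt by (intro sum.cong refl trunc_sum) auto
  finally show "(\<Sum>h<n. \<Sum>l<n. A i a h * B k (j - a) l * E h l 1) = (\<Sum>h\<le>i. \<Sum>l\<le>k. A i a h * B k (j - a) l * E h l 1)" .
qed

theorem proposition2p1:
  fixes n :: nat
    and p d :: "nat \<Rightarrow> nat \<Rightarrow> nat \<Rightarrow> 'a::{alg_closed_field, field_char_0}"
  assumes "n \<ge> 2"
    and "regular_qmagma n p d"
  shows "qcycle_coalg n p d \<longleftrightarrow>
    (\<forall>i<n. \<forall>j<n. \<forall>k<n.
      (\<Sum>a\<le>j. \<Sum>h\<le>i. \<Sum>l\<le>k. p i a h * d k (j - a) l * p h l 1) =
        (\<Sum>c\<le>k. \<Sum>h\<le>i. \<Sum>l\<le>j. p i c h * p j (k - c) l * p h l 1) \<and>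
      (\<Sum>a\<le>j. \<Sum>h\<le>i. \<Sum>l\<le>k. p i a h * p k (j - a) l * d h l 1) =
        (\<Sum>c\<le>k. \<Sum>h\<le>i. \<Sum>l\<le>j. d i c h * d j (k - c) l * p h l 1) \<and>
      (\<Sum>a\<le>j. \<Sum>h\<le>i. \<Sum>l\<le>k. d i a h * p k (j - a) l * d h l 1) =
        (\<Sum>c\<le>k. \<Sum>h\<le>i. \<Sum>l\<le>j. d i c h * d j (k - c) l * d h l 1))"
proof -
  note n = assms(1) and reg = assms(2)
  have p: "coalg_mor n p" and d: "coalg_mor n d" using reg unfolding regular_qmagma_def by auto
  have np: "p 1 0 1 \<noteq> 0" and nd: "d 1 0 1 \<noteq> 0" using reg_nz[OF reg n] by auto
  have Q: "qcycle_coalg n p d \<longleftrightarrow>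
     (\<forall>a b c. inC n a \<longrightarrow> inC n b \<longrightarrow> inC n c \<longrightarrow>
        swe n b (\<lambda>s t. bop n p (bop n p a s) (bop n d c t)) =
          swe n c (\<lambda>s t. bop n p (bop n p a t) (bop n p b s))) \<and>
     (\<forall>a b c. inC n a \<longrightarrow> inC n b \<longrightarrow> inC n c \<longrightarrow>
        swe n b (\<lambda>s t. bop n d (bop n p a s) (bop n p c t)) =
          swe n c (\<lambda>s t. bop n p (bop n d a t) (bop n d b s))) \<and>
     (\<forall>a b c. inC n a \<longrightarrow> inC n b \<longrightarrow> inC n c \<longrightarrow>
        swe n b (\<lambda>s t. bop n d (bop n d a s) (bop n d c t)) =
          swe n c (\<lambda>s t. bop n d (bop n d a t) (bop n p b s)))"
    unfolding qcycle_coalg_def using reg by blast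
  have R: "(\<forall>i<n. \<forall>j<n. \<forall>k<n.
      (\<Sum>a\<le>j. \<Sum>h\<le>i. \<Sum>l\<le>k. p i a h * d k (j - a) l * p h l 1) =
        (\<Sum>c\<le>k. \<Sum>h\<le>i. \<Sum>l\<le>j. p i c h * p j (k - c) l * p h l 1) \<and>
      (\<Sum>a\<le>j. \<Sum>h\<le>i. \<Sum>l\<le>k. p i a h * p k (j - a) l * d h l 1) =
        (\<Sum>c\<le>k. \<Sum>h\<le>i. \<Sum>l\<le>j. d i c h * d j (k - c) l * p h l 1) \<and>
      (\<Sum>a\<le>j. \<Sum>h\<le>i. \<Sum>l\<le>k. d i a h * p k (j - a) l * d h l 1) =
        (\<Sum>c\<le>k. \<Sum>h\<le>i. \<Sum>l\<le>j. d i c h * d j (k - c) l * d h l 1))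
    \<longleftrightarrow> (\<forall>i<n. \<forall>j<n. \<forall>k<n.
      GG n p d p i j k 1 = GG n p p p i k j 1 \<and>
      GG n p p d i j k 1 = GG n d d p i k j 1 \<and>
      GG n d p d i j k 1 = GG n d d d i k j 1)"
  proof -
    have "(\<Sum>a\<le>j. \<Sum>h\<le>i. \<Sum>l\<le>k. p i a h * d k (j - a) l * p h l 1) =
        (\<Sum>c\<le>k. \<Sum>h\<le>i. \<Sum>l\<le>j. p i c h * p j (k - c) l * p h l 1) \<and>
      (\<Sum>a\<le>j. \<Sum>h\<le>i. \<Sum>l\<le>k. p i a h * p k (j - a) l * d h l 1) =
        (\<Sum>c\<le>k. \<Sum>h\<le>i. \<Sum>l\<le>j. d i c h * d j (k - c) l * p h l 1) \<and>
      (\<Sum>a\<le>j. \<Sum>h\<le>i. \<Sum>l\<le>k. d i a h * p k (j - a) l * d h l 1) =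
        (\<Sum>c\<le>k. \<Sum>h\<le>i. \<Sum>l\<le>j. d i c h * d j (k - c) l * d h l 1)
      \<longleftrightarrow>
      GG n p d p i j k 1 = GG n p p p i k j 1 \<and>
      GG n p p d i j k 1 = GG n d d p i k j 1 \<and>
      GG n d p d i j k 1 = GG n d d d i k j 1" if lt: "i<n" "j<n" "k<n" for i j k
      using GG_trunc[OF p d n np nd lt, of p] GG_trunc[OF p p n np np lt(1,3,2), of p]
        GG_trunc[OF p p n np np lt, of d] GG_trunc[OF d d n nd nd lt(1,3,2), of p]
        GG_trunc[OF d p n nd np lt, of d] GG_trunc[OF d d n nd nd lt(1,3,2), of d]
      by simp
    then show ?thesis by blast
  qed
  note E1 = eq_iff[OF p d p p p p n]
  note E2 = eq_iff[OF p p d d d p n]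
  note E3 = eq_iff[OF d d d d p d n]
  have G3: "(\<forall>i<n. \<forall>j<n. \<forall>k<n. GG n d d d i j k 1 = GG n d p d i k j 1) \<longleftrightarrow>
            (\<forall>i<n. \<forall>j<n. \<forall>k<n. GG n d p d i j k 1 = GG n d d d i k j 1)"
    by metis
  show ?thesis
    unfolding Q R E1 E2 E3 G3 by blast
qed

end
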